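(* Let $p_i<p_j$ be primes and let $m\ge p_j^2$ be an integer, and put $M'=\lceil m(1-3/p_j)\rceil$. (a) If $p_i\ge 3$, then $N_m(\{p_i,p_j\})\ge N_{M'}(\{p_i\})$, i.e. $$\#\{1\le k\le m:\ p_i\nmid k(k+2),\ p_j\nmid k(k+2)\}\ \ge\ M'-\left\lfloor \tfrac{M'}{p_i}\right\rfloor-\left\lfloor \tfrac{M'+2}{p_i}\right\rfloor .$$ (b) If $p_i=2$ (so $p_j\ge 3$), then $N_m(\{2,p_j\})\ge N_{M'}(\{2\})$, i.e. $$\#\{1\le k\le m:\ k \text{ odd},\ p_j\nmid k(k+2)\}\ \ge\ M'-\left\lfloor \tfrac{M'}{2}\right\rfloor .$$
   Context: For a finite set $Q$ of primes and an integer $x\ge 0$, $N_x(Q)=\#\{k\in\{1,\dots,x\}:\ p\nmid k(k+2)\text{ for every }p\in Q\}$. (For $p=2$ the condition $2\nmid k(k+2)$ just says $k$ is odd; for odd $p$ one has $N_x(\{p\})=x-\lfloor x/p\rfloor-\lfloor (x+2)/p\rfloor$.) $\lfloor\cdot\rfloor,\lceil\cdot\rceil$ are floor and ceiling. *)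

theory Defs
  imports Complex_Main "HOL-Computational_Algebra.Primes"
begin

definition Ncount :: "nat \<Rightarrow> nat set \<Rightarrow> nat" where
  "Ncount x Q = card {k \<in> {1..x}. \<forall>p\<in>Q. \<not> p dvd k * (k + 2)}"

end

theory Submission
  imports Defs
begin

lemma Ncount_Suc:
  "Ncount (Suc x) Q = Ncount x Q + (if \<forall>p\<in>Q. \<not> p dvd Suc x * (Suc x + 2) then 1 else 0)"
proof -
  have e: "{k \<in> {1..Suc x}. \<forall>p\<in>Q. \<not> p dvd k * (k + 2)} =
     (if \<forall>p\<in>Q. \<not> p dvd Suc x * (Suc x + 2) then insert (Suc x) else id)
        {k \<in> {1..x}. \<forall>p\<in>Q. \<not> p dvd k * (k + 2)}"
    by (auto simp: le_Suc_eq)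
  show ?thesis unfolding Ncount_def e by auto
qed

lemma div_Suc':
  "Suc m div n = m div n + (if n dvd Suc m then 1 else 0)"
  by (simp add: div_Suc dvd_eq_mod_eq_0)

lemma Ncount_odd_nat:
  assumes "prime p" "p \<ge> 3"
  shows "Ncount x {p} + x div p + (x + 2) div p = x"
proof (induction x)
  case 0
  then show ?case using assms by (simp add: Ncount_def)
next
  case (Suc x)
  have d1: "Suc x div p = x div p + (if p dvd Suc x then 1 else 0)" by (rule div_Suc')
  have d2: "(Suc x + 2) div p = (x + 2) div p + (if p dvd (Suc x + 2) then 1 else 0)"
    using div_Suc'[of "x+2" p] by simp
  have nd: "\<not> (p dvd Suc x \<and> p dvd (Suc x + 2))"
  proof
    assume "p dvd Suc x \<and> p dvd (Suc x + 2)"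
    then have "p dvd 2" by (metis dvd_add_right_iff)
    then have "p \<le> 2" by (simp add: dvd_imp_le)
    then show False using assms by simp
  qed
  have pd: "p dvd Suc x * (Suc x + 2) \<longleftrightarrow> p dvd Suc x \<or> p dvd (Suc x + 2)"
    using assms(1) prime_dvd_mult_iff by blast
  have ncs: "Ncount (Suc x) {p} = Ncount x {p} + (if p dvd Suc x \<or> p dvd (Suc x + 2) then 0 else 1)"
    using Ncount_Suc[of x "{p}"] pd by simp
  show ?case unfolding ncs d1 d2 using Suc.IH nd by (auto split: if_splits)
qed

lemma Ncount_two_nat:
  shows "Ncount x {2} + x div 2 = x"
proof (induction x)
  case 0
  then show ?case by (simp add: Ncount_def)
next
  case (Suc x)
  have d1: "Suc x div 2 = x div 2 + (if 2 dvd Suc x then 1 else 0)" by (rule div_Suc')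
  have pd: "(2::nat) dvd Suc x * (Suc x + 2) \<longleftrightarrow> 2 dvd Suc x"
    by simp
  show ?case using Suc.IH unfolding Ncount_Suc d1 pd by auto
qed


lemma affine_mod_inj:
  fixes p u v :: nat
  assumes "prime p" "\<not> p dvd u" "t1 < t2" "t2 < t1 + p"
  shows "(u*t1+v) mod p \<noteq> (u*t2+v) mod p"
proof
  assume eq: "(u*t1+v) mod p = (u*t2+v) mod p"
  have le: "u*t1+v \<le> u*t2+v" using assms(3) by simp
  have d1: "p dvd (u*t2+v) - (u*t1+v)" by (rule mod_eq_dvd_iff_nat[OF le, THEN iffD1, OF eq[symmetric]])
  have e: "(u*t2+v) - (u*t1+v) = u*(t2-t1)" by (simp add: diff_mult_distrib2)
  have "p dvd u*(t2-t1)" using d1 unfolding e .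
  then have "p dvd u \<or> p dvd (t2-t1)" by (rule prime_dvd_multD[OF assms(1)])
  then have "p dvd (t2-t1)" using assms(2) by blast
  moreover have "0 < t2 - t1" using assms(3) by simp
  ultimately have "p \<le> t2 - t1" by (rule dvd_imp_le)
  then show False using assms(3,4) by linarith
qed

lemma window_count:
  fixes p u v :: nat and Q :: "nat \<Rightarrow> bool"
  assumes pp: "prime p" and pu: "\<not> p dvd u" and Qper: "\<And>x. Q x = Q (x mod p)"
  defines "c \<equiv> card {r\<in>{..<p}. Q r}" and "d \<equiv> card {r\<in>{..<p}. \<not> Q r}"
  shows "p * card {t\<in>{a..<a+n}. Q (u*t+v)} \<le> c*(n+d) \<and>
         c*n \<le> p * card {t\<in>{a..<a+n}. Q (u*t+v)} + c*d"
proof -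
  have p0: "p > 0" using pp prime_gt_0_nat by blast
  have cd: "c + d = p"
  proof -
    have "{r\<in>{..<p}. Q r} \<union> {r\<in>{..<p}. \<not> Q r} = {..<p}" by auto
    moreover have "{r\<in>{..<p}. Q r} \<inter> {r\<in>{..<p}. \<not> Q r} = {}" by auto
    ultimately have "card {r\<in>{..<p}. Q r} + card {r\<in>{..<p}. \<not> Q r} = card {..<p::nat}"
      using card_Un_disjoint[of "{r\<in>{..<p}. Q r}" "{r\<in>{..<p}. \<not> Q r}"] by simp
    then show ?thesis unfolding c_def d_def by simp
  qed
  define g where "g t = (u*t+v) mod p" for t
  have small: "card {t\<in>{a..<a+n}. Q (u*t+v)} \<le> c \<and> card {t\<in>{a..<a+n}. \<not> Q (u*t+v)} \<le> d"
    if "n \<le> p" for a n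
  proof -
    have inj: "inj_on g {a..<a+n}"
    proof (rule inj_onI)
      fix x y assume xy: "x \<in> {a..<a+n}" "y \<in> {a..<a+n}" "g x = g y"
      show "x = y"
      proof (rule ccontr)
        assume "x \<noteq> y"
        then consider "x < y" | "y < x" by linarith
        then show False
        proof cases
          case 1
          then show False using affine_mod_inj[OF pp pu 1, of v] xy that unfolding g_def by auto
        next
          case 2
          then show False using affine_mod_inj[OF pp pu 2, of v] xy that unfolding g_def by auto
        qed
      qed
    qed
    have gQ: "Q (u*t+v) = Q (g t)" for t unfolding g_def using Qper by blast
    have glt: "g t < p" for t unfolding g_def using p0 by simp
    have 1: "card {t\<in>{a..<a+n}. Q (u*t+v)} = card (g ` {t\<in>{a..<a+n}. Q (u*t+v)})"
      by (rule card_image[symmetric]) (rule inj_on_subset[OF inj], auto)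
    have 2: "card {t\<in>{a..<a+n}. \<not> Q (u*t+v)} = card (g ` {t\<in>{a..<a+n}. \<not> Q (u*t+v)})"
      by (rule card_image[symmetric]) (rule inj_on_subset[OF inj], auto)
    have 3: "g ` {t\<in>{a..<a+n}. Q (u*t+v)} \<subseteq> {r\<in>{..<p}. Q r}" using gQ glt by auto
    have 4: "g ` {t\<in>{a..<a+n}. \<not> Q (u*t+v)} \<subseteq> {r\<in>{..<p}. \<not> Q r}" using gQ glt by auto
    show ?thesis unfolding c_def d_def 1 2
      using card_mono[OF _ 3] card_mono[OF _ 4] by auto
  qed
  have split: "card {t\<in>{a..<a+n}. Q (u*t+v)} + card {t\<in>{a..<a+n}. \<not> Q (u*t+v)} = n" for a n
  proof -
    have u: "{t\<in>{a..<a+n}. Q (u*t+v)} \<union> {t\<in>{a..<a+n}. \<not> Q (u*t+v)} = {a..<a+n}" by auto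
    have "card {t\<in>{a..<a+n}. Q (u*t+v)} + card {t\<in>{a..<a+n}. \<not> Q (u*t+v)} = card {a..<a+n}"
      by (subst u[symmetric], rule card_Un_disjoint[symmetric]) auto
    then show ?thesis by simp
  qed
  show ?thesis
  proof (induction n arbitrary: a rule: less_induct)
    case (less n)
    show ?case
    proof (cases "n < p")
      case True
      define X where "X = card {t\<in>{a..<a+n}. Q (u*t+v)}"
      have Xc: "X \<le> c" and nd: "n \<le> X + d" using small[of n a] split[of a n] True unfolding X_def by auto
      have Xn: "X \<le> n" using split[of a n] unfolding X_def by linarith
      have "p * X = c*X + d*X" using cd[symmetric] by (simp add: add_mult_distrib)
      also have "\<dots> \<le> c*n + d*c" using Xc Xn by (simp add: add_mono)
      also have "\<dots> = c*(n+d)" by (simp add: algebra_simps)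
      finally have A: "p*X \<le> c*(n+d)" .
      have "c*n \<le> c*(X+d)" using nd by simp
      also have "\<dots> = c*X + c*d" by (simp add: algebra_simps)
      also have "\<dots> \<le> p*X + c*d" using cd by simp
      finally have B: "c*n \<le> p*X + c*d" .
      show ?thesis using A B unfolding X_def by simp
    next
      case False
      define Y where "Y = card {t\<in>{a+p..<a+p+(n-p)}. Q (u*t+v)}"
      have IH: "p * Y \<le> c*(n-p+d) \<and> c*(n-p) \<le> p*Y + c*d"
        using less.IH[of "n-p" "a+p"] False p0 unfolding Y_def by auto
      have cp: "card {t\<in>{a..<a+p}. Q (u*t+v)} = c"
      proof -
        have "card {t\<in>{a..<a+p}. Q (u*t+v)} \<le> c" "card {t\<in>{a..<a+p}. \<not> Q (u*t+v)} \<le> d"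
          using small[of p a] by auto
        then show ?thesis using split[of a p] cd by linarith
      qed
      have un: "{t\<in>{a..<a+n}. Q (u*t+v)} = {t\<in>{a..<a+p}. Q (u*t+v)} \<union> {t\<in>{a+p..<a+p+(n-p)}. Q (u*t+v)}"
        using False by auto
      have cn: "card {t\<in>{a..<a+n}. Q (u*t+v)} = c + Y"
      proof -
        have "card ({t\<in>{a..<a+p}. Q (u*t+v)} \<union> {t\<in>{a+p..<a+p+(n-p)}. Q (u*t+v)})
           = card {t\<in>{a..<a+p}. Q (u*t+v)} + card {t\<in>{a+p..<a+p+(n-p)}. Q (u*t+v)}"
          by (rule card_Un_disjoint) auto
        then show ?thesis unfolding un Y_def cp by simp
      qed
      have e1: "c*(n-p+d) + c*p = c*(n+d)"
      proof -
        have "n-p+d+p = n+d" using False by simp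
        then show ?thesis by (metis add_mult_distrib2)
      qed
      have e2: "c*(n-p) + c*p = c*n"
      proof -
        have "n-p+p = n" using False by simp
        then show ?thesis by (metis add_mult_distrib2)
      qed
      have e3: "p*(c+Y) = c*p + p*Y" by (simp add: algebra_simps)
      show ?thesis unfolding cn e3 using IH e1 e2 by linarith
    qed
  qed
qed

lemma le_div_from_mult:
  fixes k n q :: nat
  assumes "q > 0" "k*q \<le> n"
  shows "k \<le> n div q"
  using div_less_iff_less_mult[OF assms(1), of n k] assms(2) by linarith

lemma card_filter_upt: "card (set (filter P [a..<b])) = length (filter P [a..<b])"
  by (rule distinct_card) simp

lemma set_filter_upt: "set (filter P [1..<Suc x]) = {k \<in> {1..x}. P k}"
  by (simp only: set_filter set_upt atLeastLessThanSuc_atLeastAtMost)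

lemma Ncount_list: "Ncount x Q = length (filter (\<lambda>k. \<forall>p\<in>Q. \<not> p dvd k * (k + 2)) [1..<Suc x])"
  unfolding Ncount_def card_filter_upt[symmetric] set_filter_upt ..


lemma Ncount_mono: "x \<le> y \<Longrightarrow> Ncount x Q \<le> Ncount y Q"
  unfolding Ncount_def by (rule card_mono) auto

lemma bad_res_le2:
  fixes p :: nat
  assumes "prime p"
  shows "card {r\<in>{..<p}. p dvd r*(r+2)} \<le> 2"
proof -
  have "{r\<in>{..<p}. p dvd r*(r+2)} \<subseteq> {0, p-2}"
  proof
    fix r assume "r \<in> {r\<in>{..<p}. p dvd r*(r+2)}"
    then have r: "r < p" "p dvd r*(r+2)" by auto
    then have "p dvd r \<or> p dvd (r+2)" using assms prime_dvd_mult_iff by blast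
    then show "r \<in> {0, p-2}"
    proof
      assume "p dvd r"
      have "r = 0"
      proof (rule ccontr)
        assume "r \<noteq> 0"
        then have "p \<le> r" using \<open>p dvd r\<close> by (intro dvd_imp_le) auto
        then show False using r(1) by simp
      qed
      then show ?thesis by simp
    next
      assume h: "p dvd (r+2)"
      have "r + 2 = p"
      proof (rule ccontr)
        assume ne: "r + 2 \<noteq> p"
        have "p \<le> r + 2" using h by (simp add: dvd_imp_le)
        with ne have gt: "p < r + 2" by simp
        have "p dvd (r+2) - p" using h by (simp add: dvd_diff_nat)
        moreover have "(r+2) - p = 1" using gt r(1) by simp
        ultimately have "p dvd 1" by simp
        then show False using assms by simp
      qed
      then show ?thesis by auto
    qed
  qed
  then have "card {r\<in>{..<p}. p dvd r*(r+2)} \<le> card {0, p-2}" by (rule card_mono[rotated]) simp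
  also have "\<dots> \<le> 2" by (simp add: card_insert_le_m1)
  finally show ?thesis .
qed

lemma bad_res_two: "card {r\<in>{..<2::nat}. 2 dvd r*(r+2)} \<le> 1"
proof -
  have "{r\<in>{..<2::nat}. 2 dvd r*(r+2)} \<subseteq> {0}" by auto
  then have "card {r\<in>{..<2::nat}. 2 dvd r*(r+2)} \<le> card {0::nat}" by (rule card_mono[rotated]) simp
  then show ?thesis by simp
qed

lemma main_ineq:
  fixes p q m M :: nat
  assumes pp: "prime p" and pq: "prime q" and pltq: "p < q" and q3: "q \<ge> 3" and Mm: "M \<le> m"
    and H: "\<And>G R1 R2. p*R1 \<le> (p-dp)*(m div q + dp) \<Longrightarrow> p*R2 \<le> (p-dp)*((m+2) div q + dp)
       \<Longrightarrow> (p-dp)*(m-M) \<le> p*G + (p-dp)*dp \<Longrightarrow> R1 + R2 \<le> G"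
    and dpdef: "dp = card {r\<in>{..<p}. p dvd r*(r+2)}"
  shows "Ncount M {p} \<le> Ncount m {p, q}"
proof -
  define Q where "Q k = (\<not> p dvd k*(k+2))" for k
  have Qper: "Q x = Q (x mod p)" for x
  proof -
    have "(x*(x+2)) mod p = ((x mod p)*((x+2) mod p)) mod p"
      by (simp only: mod_mult_left_eq mod_mult_right_eq)
    also have "(x+2) mod p = ((x mod p)+2) mod p" by (simp only: mod_add_left_eq)
    also have "((x mod p)*(((x mod p)+2) mod p)) mod p = ((x mod p)*((x mod p)+2)) mod p"
      by (simp only: mod_mult_right_eq)
    finally have "(x*(x+2)) mod p = ((x mod p)*((x mod p)+2)) mod p" .
    then show ?thesis unfolding Q_def by (simp add: dvd_eq_mod_eq_0)
  qed
  define c where "c = card {r\<in>{..<p}. Q r}"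
  define d where "d = card {r\<in>{..<p}. \<not> Q r}"
  have dd: "d = card {r\<in>{..<p}. p dvd r*(r+2)}" unfolding d_def Q_def by simp
  have pnq: "\<not> p dvd q"
  proof
    assume "p dvd q"
    then have "p = q" using pp pq primes_dvd_imp_eq by blast
    then show False using pltq by simp
  qed
  have p1: "\<not> p dvd (1::nat)" using prime_gt_1_nat[OF pp] by simp
  define T where "T = m div q"
  define T2 where "T2 = (m+2) div q"
  define G where "G = card {t\<in>{M+1..<M+1+(m-M)}. Q (1*t+0)}"
  define R1 where "R1 = card {t\<in>{0..<0+T}. Q (q*t+q)}"
  define R2 where "R2 = card {t\<in>{0..<0+T2}. Q (q*t+(q-2))}"
  have W1: "c*(m-M) \<le> p*G + c*d"
    using window_count[where p=p and u=1 and Q=Q and v=0 and a="M+1" and n="m-M", OF pp p1 Qper] unfolding G_def c_def d_def by blast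
  have W2: "p*R1 \<le> c*(T+d)"
    using window_count[where p=p and u=q and Q=Q and v=q and a=0 and n=T, OF pp pnq Qper] unfolding R1_def c_def d_def by blast
  have W3: "p*R2 \<le> c*(T2+d)"
    using window_count[where p=p and u=q and Q=Q and v="q-2" and a=0 and n=T2, OF pp pnq Qper] unfolding R2_def c_def d_def by blast
  have cd: "c + d = p"
  proof -
    have "{r\<in>{..<p}. Q r} \<union> {r\<in>{..<p}. \<not> Q r} = {..<p}" by auto
    moreover have "{r\<in>{..<p}. Q r} \<inter> {r\<in>{..<p}. \<not> Q r} = {}" by auto
    ultimately have "card {r\<in>{..<p}. Q r} + card {r\<in>{..<p}. \<not> Q r} = card {..<p::nat}"
      using card_Un_disjoint[of "{r\<in>{..<p}. Q r}" "{r\<in>{..<p}. \<not> Q r}"] by simp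
    then show ?thesis unfolding c_def d_def by simp
  qed
  have cpd: "c = p - dp" using cd dd dpdef by simp
  have ddp: "d = dp" using dd dpdef by simp
  have RG: "R1 + R2 \<le> G"
    by (rule H) (use W1 W2 W3 in \<open>simp_all add: cpd ddp T_def T2_def\<close>)
  define A where "A x = {k\<in>{1..x}. Q k}" for x
  define B where "B = {k\<in>{1..m}. Q k \<and> \<not> q dvd k*(k+2)}"
  define Rs where "Rs = {k\<in>{1..m}. Q k \<and> q dvd k*(k+2)}"
  have NA: "Ncount x {p} = card (A x)" for x unfolding Ncount_def A_def Q_def by simp
  have NB: "Ncount m {p,q} = card B" unfolding Ncount_def B_def Q_def by simp
  have AmG: "card (A m) = card (A M) + G"
  proof -
    have "A m = A M \<union> {t\<in>{M+1..<M+1+(m-M)}. Q (1*t+0)}" unfolding A_def using Mm by auto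
    moreover have "A M \<inter> {t\<in>{M+1..<M+1+(m-M)}. Q (1*t+0)} = {}" unfolding A_def by auto
    ultimately show ?thesis unfolding G_def by (simp add: card_Un_disjoint A_def)
  qed
  have AmB: "card (A m) = card B + card Rs"
  proof -
    have "A m = B \<union> Rs" unfolding A_def B_def Rs_def by auto
    moreover have "B \<inter> Rs = {}" unfolding B_def Rs_def by auto
    ultimately show ?thesis by (simp add: card_Un_disjoint B_def Rs_def)
  qed
  have q0: "q > 0" using q3 by simp
  have Rsub: "Rs \<subseteq> (\<lambda>t. q*t+q) ` {t\<in>{0..<0+T}. Q (q*t+q)} \<union> (\<lambda>t. q*t+(q-2)) ` {t\<in>{0..<0+T2}. Q (q*t+(q-2))}"
  proof
    fix k assume "k \<in> Rs"
    then have k: "1 \<le> k" "k \<le> m" "Q k" "q dvd k*(k+2)" unfolding Rs_def by auto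
    then have "q dvd k \<or> q dvd (k+2)" using pq prime_dvd_mult_iff by blast
    then show "k \<in> (\<lambda>t. q*t+q) ` {t\<in>{0..<0+T}. Q (q*t+q)} \<union> (\<lambda>t. q*t+(q-2)) ` {t\<in>{0..<0+T2}. Q (q*t+(q-2))}"
    proof
      assume "q dvd k"
      then obtain s where s: "k = q*s" by blast
      with k(1) obtain t where t: "s = Suc t" by (cases s) auto
      have kt: "k = q*t+q" using s t by simp
      have "k div q = s" using s q0 by simp
      moreover have "k div q \<le> m div q" using k(2) by (rule div_le_mono)
      ultimately have "t < T" unfolding T_def using t by simp
      then show ?thesis using kt k(3) by auto
    next
      assume "q dvd (k+2)"
      then obtain s where s: "k + 2 = q*s" by blast
      with k(1) obtain t where t: "s = Suc t" by (cases s) auto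
      have kt: "k = q*t+(q-2)" using s t q3 by simp
      have "(k+2) div q = s" using s q0 by simp
      moreover have "(k+2) div q \<le> (m+2) div q" using k(2) by (simp add: div_le_mono)
      ultimately have "t < T2" unfolding T2_def using t by simp
      then show ?thesis using kt k(3) by auto
    qed
  qed
  have "card Rs \<le> card ((\<lambda>t. q*t+q) ` {t\<in>{0..<0+T}. Q (q*t+q)}) + card ((\<lambda>t. q*t+(q-2)) ` {t\<in>{0..<0+T2}. Q (q*t+(q-2))})"
    by (rule order_trans[OF card_mono[OF _ Rsub] card_Un_le]) auto
  also have "\<dots> \<le> R1 + R2" unfolding R1_def R2_def by (intro add_mono card_image_le) auto
  finally have "card Rs \<le> R1 + R2" .
  then show ?thesis unfolding NA NB using AmG AmB RG by linarith
qed

lemma prime_not_even_gt2: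
  fixes p :: nat
  assumes "prime p" "even p"
  shows "p = 2"
  using primes_dvd_imp_eq[OF two_is_prime_nat assms(1)] assms(2) by simp

theorem lemma4p3:
  fixes pi pj m :: nat
  assumes "prime pi" "prime pj" "pi < pj" "m \<ge> pj ^ 2"
  defines "M' \<equiv> nat (ceiling (real m * (1 - 3 / real pj)))"
  shows "(pi \<ge> 3 \<longrightarrow> Ncount m {pi, pj} \<ge> Ncount M' {pi}
            \<and> int (Ncount m {pi, pj}) \<ge> int M' - int M' div int pi - (int M' + 2) div int pi)
       \<and> (pi = 2 \<longrightarrow> Ncount m {2, pj} \<ge> Ncount M' {2}
            \<and> int (Ncount m {2, pj}) \<ge> int M' - int M' div 2)"
proof -
  have pi2: "pi \<ge> 2" using assms(1) prime_ge_2_nat by blast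
  have pj3: "pj \<ge> 3" using pi2 assms(3) by simp
  have pj0: "pj > 0" using pj3 by simp
  define T where "T = m div pj"
  define T2 where "T2 = (m+2) div pj"
  define K where "K = 3*m div pj"
  have Km: "K \<le> m"
  proof -
    have "K \<le> 3*m div 3" unfolding K_def using pj3 by (intro div_le_mono2) simp_all
    then show ?thesis by simp
  qed
  have MK: "M' \<le> m - K"
  proof -
    have "real K \<le> real (3*m) / real pj" unfolding K_def by (rule of_nat_div_le_of_nat)
    then have "real m * (1 - 3 / real pj) \<le> real m - real K"
      using pj0 by (simp add: algebra_simps)
    also have "\<dots> = real (m - K)" using Km by simp
    finally have X: "real m * (1 - 3 / real pj) \<le> of_int (int (m - K))" by simp
    have "ceiling (real m * (1 - 3 / real pj)) \<le> int (m - K)"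
      using X by (simp only: ceiling_le_iff)
    then show ?thesis unfolding M'_def nat_le_iff .
  qed
  have TK: "3*T \<le> K"
    unfolding T_def K_def using pj0
    by (intro le_div_from_mult) (auto simp: mult.assoc [symmetric] intro: mult_le_mono2)
  have Tpj: "pj \<le> T"
    unfolding T_def using pj0 assms(4) by (intro le_div_from_mult) (auto simp: power2_eq_square)
  have T2T: "T2 \<le> T + 1"
  proof -
    have "T2 \<le> (m + pj) div pj" unfolding T2_def using pj3 by (intro div_le_mono) simp
    then show ?thesis unfolding T_def using pj0 by simp
  qed
  have T2K: "T2 = T + 1 \<Longrightarrow> 3*T + 1 \<le> K"
  proof -
    assume h: "T2 = T + 1"
    have "(T+1)*pj \<le> m + 2" using h unfolding T2_def
      using times_div_less_eq_dividend[of pj "m+2"] by (simp add: mult.commute)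
    then have "(3*T+1)*pj \<le> 3*m" using pj3 by (simp add: algebra_simps)
    then show ?thesis unfolding K_def using pj0 by (rule le_div_from_mult[rotated])
  qed
  have key: "Ncount M' {pi} \<le> Ncount m {pi, pj}"
  proof (cases "pj = 3")
    case True
    then have "K = m" unfolding K_def by simp
    then have "M' = 0" using MK by simp
    then show ?thesis by (simp add: Ncount_def)
  next
    case pjn3: False
    define dp where "dp = card {r\<in>{..<pi}. pi dvd r*(r+2)}"
    have d2: "dp \<le> 2" unfolding dp_def by (rule bad_res_le2[OF assms(1)])
    have pj5: "pj \<ge> 5"
    proof -
      have "pj \<noteq> 4" using prime_not_even_gt2[OF assms(2)] by auto
      then show ?thesis using pj3 pjn3 by simp
    qed
    have Mm: "M' \<le> m" using MK by simp
    have LK: "K \<le> m - M'" using MK Km by simp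
    have H: "R1 + R2 \<le> G"
      if a1: "pi*R1 \<le> (pi-dp)*(T + dp)" and a2: "pi*R2 \<le> (pi-dp)*(T2+dp)"
        and a3: "(pi-dp)*(m-M') \<le> pi*G + (pi-dp)*dp" for G R1 R2
    proof (cases "pj = 5 \<and> pi = 3 \<and> m < 30")
      case True
      then have m25: "25 \<le> m" using assms(4) by simp
      have "5 \<le> m div 5" using m25 by (intro le_div_from_mult) auto
      moreover have "m div 5 < 6" using div_less_iff_less_mult[of 5 m 6] True by simp
      ultimately have T5: "T = 5" unfolding T_def using True by simp
      have "T2 \<le> 6" using T2T T5 by simp
      moreover have "15 \<le> m - M'" using TK T5 LK by simp
      moreover have "pi = 3" using True by simp
      moreover have "dp = 0 \<or> dp = 1 \<or> dp = 2" using d2 by auto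
      ultimately show ?thesis using a1 a2 a3 T5 by auto
    next
      case False
      have Lb: "T + T2 + 3 * dp \<le> K"
      proof (cases "pi = 2")
        case True
        then have "dp \<le> 1" unfolding dp_def using bad_res_two by simp
        then show ?thesis using TK T2T Tpj pj5 by linarith
      next
        case pin2: False
        show ?thesis
        proof (cases "T \<ge> 7")
          case True
          then show ?thesis using TK T2T d2 by linarith
        next
          case Tl: False
          have "pj \<le> 6" using Tl Tpj by simp
          moreover have "pj \<noteq> 6" using prime_not_even_gt2[OF assms(2)] by auto
          ultimately have pj_5: "pj = 5" using pj5 by simp
          moreover have "pi \<noteq> 4" using prime_not_even_gt2[OF assms(1)] by auto
          ultimately have "pi = 3" using pin2 assms(3) pi2 by simp
          then have "m \<ge> 30" using False pj_5 by simp
          then have "6 \<le> m div 5" by (intro le_div_from_mult) auto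
          then have "T = 6" using Tl unfolding T_def pj_5 by simp
          then show ?thesis using TK T2T T2K d2 by linarith
        qed
      qed
      define c where "c = pi - dp"
      have "c*(T+T2+3*dp) \<le> c*(m-M')" using Lb LK by simp
      moreover have "c*(T+T2+3*dp) = c*(T+dp) + c*(T2+dp) + c*dp" by (simp add: algebra_simps)
      ultimately have "pi*(R1+R2) \<le> pi*G" using a1 a2 a3 unfolding c_def[symmetric]
        by (simp add: add_mult_distrib2)
      then show ?thesis using assms(1) prime_gt_0_nat by simp
    qed
    show ?thesis
      by (rule main_ineq[OF assms(1,2,3) pj3 Mm H[unfolded T_def T2_def] dp_def])
  qed
  show ?thesis
  proof (intro conjI impI)
    assume "pi \<ge> 3"
    show "Ncount M' {pi} \<le> Ncount m {pi, pj}" by (rule key)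
    have "Ncount M' {pi} + M' div pi + (M' + 2) div pi = M'" using Ncount_odd_nat[OF assms(1) \<open>pi \<ge> 3\<close>] .
    moreover have e1: "int (M' div pi) = int M' div int pi" by (rule zdiv_int)
    moreover have e2: "int ((M' + 2) div pi) = (int M' + 2) div int pi"
      using zdiv_int[of "M'+2" pi] by (simp only: of_nat_add of_nat_numeral)
    ultimately show "int M' - int M' div int pi - (int M' + 2) div int pi \<le> int (Ncount m {pi, pj})"
      using key by linarith
  next
    assume "pi = 2"
    then show "Ncount M' {2} \<le> Ncount m {2, pj}" using key by simp
    have "Ncount M' {2} + M' div 2 = M'" by (rule Ncount_two_nat)
    moreover have e1: "int (M' div 2) = int M' div 2" using zdiv_int[of M' 2] by simp
    ultimately show "int M' - int M' div 2 \<le> int (Ncount m {2, pj})"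
      using key \<open>pi = 2\<close> by simp
  qed
qed

end
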